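(* For all $\delta_1,\delta_2\in\mathbb{N}^{-1}$, $$D(\delta_1\delta_2)\le D(\delta_1)\,D(\delta_2).$$
   Context: Write $e(z)=e^{2\pi i z}$ and $\gamma(\xi)=(\xi,\xi^2,\xi^3)$. For an interval $J\subset[0,1]$ and $g:[0,1]\to\mathbb{C}$ define $(\mathcal{E}_J g)(x)=\int_J g(\xi)\,e(x\cdot\gamma(\xi))\,d\xi$, $x\in\mathbb{R}^3$. $\mathbb{N}^{-1}=\{1/n:n\in\mathbb{N}\}$. For $\delta\in\mathbb{N}^{-1}$, $P_\delta([0,1])$ is the partition of $[0,1]$ into intervals of length $\delta$, and $D(\delta)$ is the smallest constant such that $\|\mathcal{E}_{[0,1]}g\|_{L^{12}(\mathbb{R}^3)}\le D(\delta)\big(\sum_{J\in P_\delta([0,1])}\|\mathcal{E}_J g\|_{L^{12}(\mathbb{R}^3)}^4\big)^{1/4}$ for all $g:[0,1]\to\mathbb{C}$. *)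

theory Defs
  imports "HOL-Analysis.Analysis"
begin

definition e_char :: "real \<Rightarrow> complex" where
  "e_char z = exp (2 * of_real pi * \<i> * of_real z)"

definition ext_op :: "real set \<Rightarrow> (real \<Rightarrow> complex) \<Rightarrow> real^3 \<Rightarrow> complex" where
  "ext_op J g x = (LINT \<xi>:J|lborel. g \<xi> * e_char (x$1 * \<xi> + x$2 * \<xi>^2 + x$3 * \<xi>^3))"

definition enn_root :: "real \<Rightarrow> ennreal \<Rightarrow> ennreal" where
  "enn_root p a = (if a = top then top else ennreal (enn2real a powr (1 / p)))"

definition L12_norm :: "(real^3 \<Rightarrow> complex) \<Rightarrow> ennreal" where
  "L12_norm f = enn_root 12 (\<integral>\<^sup>+ x. ennreal (cmod (f x)) ^ 12 \<partial>lborel)"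

definition part :: "real \<Rightarrow> real set set" where
  "part \<delta> = {J. \<exists>k::nat. real k < 1 / \<delta> \<and> J = {real k * \<delta> .. (real k + 1) * \<delta>}}"

definition Dec :: "real \<Rightarrow> ennreal" where
  "Dec \<delta> = Inf {C. \<forall>g :: real \<Rightarrow> complex. set_integrable lborel {0..1} g \<longrightarrow>
      L12_norm (ext_op {0..1} g)
        \<le> C * enn_root 4 (\<Sum>J\<in>part \<delta>. L12_norm (ext_op J g) ^ 4)}"

end

theory Submission
  imports Defs
begin


lemma e_char_meas[measurable]: "e_char \<in> borel_measurable borel"
  unfolding e_char_def by (intro borel_measurable_continuous_onI continuous_intros)

lemma vec_nth_meas[measurable]: "(\<lambda>x::real^'n. x $ i) \<in> borel_measurable borel"
  by (intro borel_measurable_continuous_onI continuous_intros)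

lemma ext_meas[measurable]:
  assumes [measurable]: "g \<in> borel_measurable borel" "J \<in> sets borel"
  shows "ext_op J g \<in> borel_measurable borel"
proof -
  have eq: "sets (borel \<Otimes>\<^sub>M lborel) = sets ((borel::(real^3) measure) \<Otimes>\<^sub>M (borel::real measure))"
    by (rule sets_pair_measure_cong) auto
  have "(\<lambda>x. ext_op J g x) \<in> borel_measurable borel"
    unfolding ext_op_def set_lebesgue_integral_def
    by (rule lborel.borel_measurable_lebesgue_integral, subst measurable_cong_sets[OF eq refl]) measurable
  then show ?thesis by simp
qed

lemma nn_integral_linear_cov:
  fixes T :: "(real,'n::{finite,wellorder}) vec \<Rightarrow> (real,'n) vec"
  assumes lin: "linear T" and det: "det (matrix T) \<noteq> 0"
    and f[measurable]: "f \<in> borel_measurable borel"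
  shows "(\<integral>\<^sup>+y. f y \<partial>lborel) = ennreal \<bar>det (matrix T)\<bar> * (\<integral>\<^sup>+x. f (T x) \<partial>lborel)"
proof -
  have "inj T" using det det_nz_iff_inj lin by blast
  then obtain Ti where Ti: "linear Ti" "\<And>x. Ti (T x) = x" "\<And>x. T (Ti x) = x"
    using linear_injective_isomorphism[OF lin] by auto
  have "matrix (Ti \<circ> T) = matrix Ti ** matrix T" using matrix_compose[OF lin Ti(1)] .
  moreover have "Ti \<circ> T = id" using Ti by auto
  ultimately have dd: "det (matrix Ti) * det (matrix T) = 1"
    by (metis det_I det_mul matrix_id_mat_1)
  have Tm[measurable]: "T \<in> borel_measurable borel"
    using lin by (intro borel_measurable_continuous_onI linear_continuous_on) (simp add: linear_conv_bounded_linear)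
  have pre: "T -` A = Ti ` A" for A
    using Ti by (auto intro!: image_eqI)
  define M where "M = density (distr lborel borel T) (\<lambda>_. ennreal \<bar>det (matrix T)\<bar>)"
  have "lborel = M"
  proof (rule lborel_eqI)
    fix l u :: "(real,'n) vec" assume le: "\<And>b. b \<in> Basis \<Longrightarrow> l \<bullet> b \<le> u \<bullet> b"
    have bl: "box l u \<in> lmeasurable" by simp
    have "emeasure M (box l u) = ennreal \<bar>det (matrix T)\<bar> * emeasure lborel (T -` box l u)"
      unfolding M_def by (simp add: emeasure_density emeasure_distr nn_integral_cmult)
    also have "emeasure lborel (T -` box l u) = emeasure lebesgue (Ti ` box l u)"
    proof -
      have "T -` box l u \<in> sets borel" using measurable_sets[OF Tm, of "box l u"] by simp
      then show ?thesis by (simp add: pre[symmetric])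
    qed
    also have "\<dots> = ennreal (measure lebesgue (Ti ` box l u))"
      using measurable_linear_image[OF Ti(1) bl] by (simp add: emeasure_eq_measure2)
    also have "\<dots> = ennreal (\<bar>det (matrix Ti)\<bar> * measure lebesgue (box l u))"
      using measure_linear_image[OF Ti(1) bl] by simp
    also have "measure lebesgue (box l u) = prod ((\<bullet>) (u - l)) Basis"
      using le by (simp add: measure_lborel_box_eq)
    finally show "emeasure M (box l u) = ennreal (prod ((\<bullet>) (u - l)) Basis)"
      using dd by (simp add: ennreal_mult'[symmetric] abs_mult[symmetric] mult.assoc[symmetric] mult.commute)
  qed (simp add: M_def)
  then have "(\<integral>\<^sup>+y. f y \<partial>lborel) = (\<integral>\<^sup>+y. f y \<partial>M)" by simp
  also have "\<dots> = ennreal \<bar>det (matrix T)\<bar> * (\<integral>\<^sup>+x. f (T x) \<partial>lborel)"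
    unfolding M_def by (simp add: nn_integral_density nn_integral_distr nn_integral_cmult)
  finally show ?thesis .
qed


lemma enn_root_top[simp]: "enn_root p top = top"
  by (simp add: enn_root_def)

lemma enn_root_ennreal: "x \<ge> 0 \<Longrightarrow> enn_root p (ennreal x) = ennreal (x powr (1/p))"
  by (simp add: enn_root_def)

lemma enn_root_zero[simp]: "enn_root p 0 = 0"
  by (simp add: enn_root_def)

lemma enn_root_mono:
  assumes "p > 0" "a \<le> b" shows "enn_root p a \<le> enn_root p b"
proof (cases "b = top")
  case True then show ?thesis by simp
next
  case False
  then have bt: "b < top" using top.not_eq_extremum by blast
  then have "a \<noteq> top" using assms(2) by auto
  moreover have "enn2real a powr (1/p) \<le> enn2real b powr (1/p)"
    by (rule powr_mono2) (use assms bt enn2real_mono in auto)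
  ultimately show ?thesis using False unfolding enn_root_def
    by (simp only: if_False) (rule ennreal_leI)
qed

lemma enn_root_mult:
  assumes p: "p > 0" shows "enn_root p (a * b) = enn_root p a * enn_root p b"
proof (cases a rule: ennreal_cases)
  case (real x)
  then show ?thesis
  proof (cases b rule: ennreal_cases)
    case (real y)
    have "a * b = ennreal (x * y)" using \<open>a = ennreal x\<close> real \<open>0 \<le> x\<close> by (simp add: ennreal_mult)
    then have "enn_root p (a * b) = ennreal ((x * y) powr (1/p))"
      using \<open>0 \<le> x\<close> real by (simp add: enn_root_ennreal)
    also have "\<dots> = ennreal (x powr (1/p)) * ennreal (y powr (1/p))"
      using \<open>0 \<le> x\<close> real by (simp add: powr_mult ennreal_mult)
    also have "\<dots> = enn_root p a * enn_root p b"
      using \<open>a = ennreal x\<close> \<open>0 \<le> x\<close> real by (simp add: enn_root_ennreal)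
    finally show ?thesis .
  next
    case top
    show ?thesis
    proof (cases "x = 0")
      case True then show ?thesis using \<open>a = ennreal x\<close> top by (simp add: enn_root_ennreal)
    next
      case False
      then have "x > 0" using \<open>0 \<le> x\<close> by simp
      then have "a * b = top" using \<open>a = ennreal x\<close> top by (simp add: ennreal_mult_top)
      moreover have "enn_root p a > 0" using \<open>a = ennreal x\<close> \<open>x > 0\<close> by (simp add: enn_root_ennreal)
      ultimately show ?thesis using top by (simp add: ennreal_mult_top)
    qed
  qed
next
  case top
  show ?thesis
  proof (cases "b = 0")
    case True then show ?thesis using top by (simp add: enn_root_ennreal[of 0, simplified])
  next
    case False
    then have "a * b = top" using top by (simp add: ennreal_top_mult)
    moreover have "enn_root p b > 0"
    proof (cases b rule: ennreal_cases)
      case (real y) then show ?thesis using False by (simp add: enn_root_ennreal)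
    qed simp
    ultimately show ?thesis using top by (simp add: ennreal_top_mult)
  qed
qed

lemma real_pow_root: "p > 0 \<Longrightarrow> r \<ge> 0 \<Longrightarrow> (r ^ p) powr (1 / real p) = r"
proof (cases "r = 0")
  case False
  assume "p > 0" "r \<ge> 0"
  then have "r > 0" using False by simp
  then have "r ^ p = r powr (real p)" by (simp add: powr_realpow)
  then show ?thesis using \<open>p > 0\<close> \<open>r > 0\<close> by (simp add: powr_powr)
qed simp

lemma real_root_pow: "p > 0 \<Longrightarrow> r \<ge> 0 \<Longrightarrow> (r powr (1 / real p)) ^ p = r"
proof (cases "r = 0")
  case False
  assume "p > 0" "r \<ge> 0"
  then have "r > 0" using False by simp
  then have "(r powr (1 / real p)) ^ p = (r powr (1 / real p)) powr (real p)"
    by (simp add: powr_realpow)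
  then show ?thesis using \<open>p > 0\<close> \<open>r > 0\<close> by (simp add: powr_powr)
qed simp

lemma enn_root_pow: "p > 0 \<Longrightarrow> enn_root (real p) (x ^ p) = x"
proof (cases x rule: ennreal_cases)
  case (real r)
  assume "p > 0"
  then show ?thesis using real
    by (simp add: enn_root_def ennreal_power real_pow_root)
next
  case top
  assume "p > 0" then show ?thesis using top by (simp add: top_power_ennreal)
qed

lemma pow_enn_root: "p > 0 \<Longrightarrow> enn_root (real p) x ^ p = x"
proof (cases x rule: ennreal_cases)
  case (real r)
  assume "p > 0"
  then show ?thesis using real
    by (simp add: enn_root_def ennreal_power real_root_pow)
next
  case top
  assume "p > 0" then show ?thesis using top by (simp add: top_power_ennreal)
qed

lemma enn_root_12_cube: "enn_root 12 (w ^ 3) = enn_root 4 w"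
proof -
  have "w = enn_root (real 4) w ^ 4" using pow_enn_root[of 4 w] by simp
  then have "w ^ 3 = (enn_root 4 w ^ 4) ^ 3" by simp
  also have "\<dots> = enn_root 4 w ^ 12" by (simp flip: power_mult)
  finally show ?thesis using enn_root_pow[of 12 "enn_root 4 w"] by simp
qed




definition phase :: "real^3 \<Rightarrow> real \<Rightarrow> real" where
  "phase x \<xi> = x$1  *  \<xi> + x$2  *  \<xi>^2 + x$3  *  \<xi>^3"

definition Tm :: "real \<Rightarrow> real \<Rightarrow> real^3 \<Rightarrow> real^3" where
  "Tm a s x = vector [s * x$1 + 2 * a * s * x$2 + 3 * a^2 * s * x$3, s^2 * x$2 + 3 * a * s^2 * x$3, s^3 * x$3]"

lemma Tm_nth: "Tm a s x $ 1 = s * x$1 + 2 * a * s * x$2 + 3 * a^2 * s * x$3"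
  "Tm a s x $ 2 = s^2 * x$2 + 3 * a * s^2 * x$3" "Tm a s x $ 3 = s^3 * x$3"
  by (simp_all add: Tm_def)

lemma phase_shift: "phase x (a + s  *  \<eta>) = phase x a + phase (Tm a s x) \<eta>"
  by (simp add: phase_def Tm_nth power2_eq_square power3_eq_cube algebra_simps)

lemma Tm_linear: "linear (Tm a s)"
  by (rule linearI) (simp_all add: vec_eq_iff forall_3 Tm_nth algebra_simps)

lemma Tm_det: "det (matrix (Tm a s)) = s^6"
  by (simp add: det_3 matrix_def Tm_nth axis_def eval_nat_numeral)

lemma e_char_add: "e_char (u + v) = e_char u  *  e_char v"
  by (simp add: e_char_def distrib_left exp_add)

lemma cmod_e_char[simp]: "cmod (e_char u) = 1"
proof -
  have "e_char u = exp (\<i>  *  complex_of_real (2  *  pi  *  u))" by (simp add: e_char_def mult_ac)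
  then show ?thesis by (simp only: norm_exp_i_times)
qed

lemma ext_op_phase: "ext_op J g x = (LINT \<xi>:J|lborel. g \<xi>  *  e_char (phase x \<xi>))"
  by (simp add: ext_op_def phase_def)


lemma indicator_affine: "(s::real) > 0 \<Longrightarrow> indicator {a + s * c .. a + s * d} (a + s * \<eta>) = (indicator {c..d} \<eta> :: real)"
proof -
  assume s: "s > 0"
  have "a + s * c \<le> a + s * \<eta> \<longleftrightarrow> c \<le> \<eta>" "a + s * \<eta> \<le> a + s * d \<longleftrightarrow> \<eta> \<le> d"
    using s by (simp_all add: mult_le_cancel_left_pos)
  then show ?thesis by (simp add: indicator_def)
qed

lemma ext_rescale:
  assumes s: "s > 0"
  shows "ext_op {a + s * c .. a + s * d} g x
       = (complex_of_real s * e_char (phase x a)) * ext_op {c..d} (\<lambda>\<eta>. g (a + s * \<eta>)) (Tm a s x)"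
proof -
  have "ext_op {a + s * c .. a + s * d} g x
      = (\<integral>\<xi>. indicator {a + s * c .. a + s * d} \<xi> *\<^sub>R (g \<xi> * e_char (phase x \<xi>)) \<partial>lborel)"
    by (simp add: ext_op_phase set_lebesgue_integral_def)
  also have "\<dots> = \<bar>s\<bar> *\<^sub>R (\<integral>\<eta>. indicator {a + s * c .. a + s * d} (a + s * \<eta>) *\<^sub>R
                     (g (a + s * \<eta>) * e_char (phase x (a + s * \<eta>))) \<partial>lborel)"
    using s by (intro lborel_integral_real_affine) simp
  also have "(\<lambda>\<eta>. indicator {a + s * c .. a + s * d} (a + s * \<eta>) *\<^sub>R
                     (g (a + s * \<eta>) * e_char (phase x (a + s * \<eta>))))
      = (\<lambda>\<eta>. e_char (phase x a) * (indicator {c..d} \<eta> *\<^sub>R (g (a + s * \<eta>) * e_char (phase (Tm a s x) \<eta>))))"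
    unfolding indicator_affine[OF s] phase_shift e_char_add by (auto simp: indicator_def fun_eq_iff)
  also have "(\<integral>\<eta>. e_char (phase x a) * (indicator {c..d} \<eta> *\<^sub>R (g (a + s * \<eta>) * e_char (phase (Tm a s x) \<eta>))) \<partial>lborel)
      = e_char (phase x a) * ext_op {c..d} (\<lambda>\<eta>. g (a + s * \<eta>)) (Tm a s x)"
    unfolding ext_op_phase set_lebesgue_integral_def by (rule integral_mult_right_zero)
  finally show ?thesis using s by (simp add: scaleR_conv_of_real mult_ac)
qed


lemma Tm_meas[measurable]: "Tm a s \<in> borel_measurable borel"
  using Tm_linear[of a s]
  by (intro borel_measurable_continuous_onI linear_continuous_on) (simp add: linear_conv_bounded_linear)

lemma L12_rescale:
  assumes s: "s > 0" and g[measurable]: "g \<in> borel_measurable borel"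
  shows "L12_norm (ext_op {a + s * c .. a + s * d} g)
       = enn_root 12 (ennreal (s^6)) * L12_norm (ext_op {c..d} (\<lambda>\<eta>. g (a + s * \<eta>)))"
proof -
  define h where "h = (\<lambda>\<eta>. g (a + s * \<eta>))"
  have h[measurable]: "h \<in> borel_measurable borel" unfolding h_def by measurable
  define F where "F = (\<lambda>y. ennreal (cmod (ext_op {c..d} h y)) ^ 12)"
  have F[measurable]: "F \<in> borel_measurable borel" unfolding F_def by measurable
  have pt: "ennreal (cmod (ext_op {a + s * c .. a + s * d} g x)) ^ 12 = ennreal (s^12) * F (Tm a s x)" for x
  proof -
    have "cmod (ext_op {a + s * c .. a + s * d} g x) = s * cmod (ext_op {c..d} h (Tm a s x))"
      using s by (simp add: ext_rescale h_def norm_mult)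
    then show ?thesis using s
      by (simp add: F_def ennreal_mult ennreal_power[symmetric] power_mult_distrib del: ennreal_power)
  qed
  have "(\<integral>\<^sup>+x. ennreal (cmod (ext_op {a + s * c .. a + s * d} g x)) ^ 12 \<partial>lborel)
      = ennreal (s^12) * (\<integral>\<^sup>+x. F (Tm a s x) \<partial>lborel)"
    by (simp add: pt nn_integral_cmult)
  also have "ennreal (s^12) = ennreal (s^6) * ennreal (s^6)"
    using s by (simp add: ennreal_mult[symmetric] power_add[symmetric])
  also have "ennreal (s^6) * ennreal (s^6) * (\<integral>\<^sup>+x. F (Tm a s x) \<partial>lborel) = ennreal (s^6) * (\<integral>\<^sup>+y. F y \<partial>lborel)"
    using nn_integral_linear_cov[OF Tm_linear[of a s], of F] s by (simp add: Tm_det mult.assoc)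
  finally show ?thesis
    unfolding L12_norm_def by (simp add: enn_root_mult F_def h_def)
qed



definition iv :: "nat \<Rightarrow> nat \<Rightarrow> real set" where
  "iv n k = {real k / real n .. (real k + 1) / real n}"

lemma part_eq: "n > 0 \<Longrightarrow> part (1 / real n) = iv n ` {..<n}"
  unfolding part_def iv_def by (auto simp: divide_inverse mult.commute)

lemma iv_inj: "n > 0 \<Longrightarrow> inj_on (iv n) {..<n}"
proof (rule inj_onI)
  fix k l assume n: "n > 0" and "k \<in> {..<n}" "l \<in> {..<n}" and eq: "iv n k = iv n l"
  have "real k / real n \<le> (real k + 1) / real n" "real l / real n \<le> (real l + 1) / real n"
    using n by (simp_all add: divide_right_mono)
  then have "real k / real n = real l / real n" using eq unfolding iv_def
    by (metis atLeastatMost_subset_iff order_antisym order_refl)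
  then show "k = l" using n by simp
qed

lemma part_sum: "n > 0 \<Longrightarrow> (\<Sum>J\<in>part (1 / real n). F J) = (\<Sum>k<n. F (iv n k))"
  by (simp add: part_eq sum.reindex iv_inj)

lemma iv_sub: "k < n \<Longrightarrow> iv n k \<subseteq> {0..1}"
  unfolding iv_def by (auto simp: field_simps)

lemma sum_group: "(\<Sum>k<n1 * n2. (G :: nat \<Rightarrow> 'a::comm_monoid_add) k) = (\<Sum>i<n1. \<Sum>j<n2. G (i * n2 + j)) "
proof -
  have "(\<Sum>k<n1 * n2. G k) = (\<Sum>i<n1. sum G {i * n2 ..< i * n2 + n2})"
    using sum.nat_group[of G n2 n1] by simp
  also have "\<dots> = (\<Sum>i<n1. \<Sum>j<n2. G (i * n2 + j))"
  proof (rule sum.cong[OF refl])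
    fix i
    show "sum G {i * n2 ..< i * n2 + n2} = (\<Sum>j<n2. G (i * n2 + j))"
    proof -
      have "sum G {0 + i * n2..<n2 + i * n2} = sum (\<lambda>j. G (j + i * n2)) {0..<n2}"
        by (rule sum.shift_bounds_nat_ivl)
      then show ?thesis by (simp add: lessThan_atLeast0 add.commute)
    qed
  qed
  finally show ?thesis .
qed

lemma iv_big: "n1 > 0 \<Longrightarrow> iv n1 i = {real i / real n1 + (1 / real n1) * 0 .. real i / real n1 + (1 / real n1) * 1}"
  unfolding iv_def by (simp add: add_divide_distrib)

lemma iv_small: "n1 > 0 \<Longrightarrow> n2 > 0 \<Longrightarrow> iv (n1 * n2) (i * n2 + j)
   = {real i / real n1 + (1 / real n1) * (real j / real n2) .. real i / real n1 + (1 / real n1) * ((real j + 1) / real n2)}"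
  unfolding iv_def by (simp add: field_simps)



definition Sset :: "real \<Rightarrow> ennreal set" where
  "Sset \<delta> = {C. \<forall>g :: real \<Rightarrow> complex. set_integrable lborel {0..1} g \<longrightarrow>
      L12_norm (ext_op {0..1} g)
        \<le> C * enn_root 4 (\<Sum>J\<in>part \<delta>. L12_norm (ext_op J g) ^ 4)}"

lemma Dec_Sset: "Dec \<delta> = Inf (Sset \<delta>)"
  unfolding Dec_def Sset_def ..

lemma piece_bound:
  assumes n1: "n1 > 0" and n2: "n2 > 0" and C2: "C2 \<in> Sset (1 / real n2)"
    and g0[measurable]: "g0 \<in> borel_measurable borel" and ig: "integrable lborel g0"
  shows "L12_norm (ext_op (iv n1 i) g0)
      \<le> C2 * enn_root 4 (\<Sum>j<n2. L12_norm (ext_op (iv (n1 * n2) (i * n2 + j)) g0) ^ 4)"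
proof -
  define a where "a = real i / real n1"
  define s where "s = 1 / real n1"
  have s: "s > 0" using n1 by (simp add: s_def)
  define h where "h = (\<lambda>\<eta>. g0 (a + s * \<eta>))"
  define K where "K = enn_root 12 (ennreal (s^6))"
  have "integrable lborel h" unfolding h_def using ig s by (intro lborel_integrable_real_affine) auto
  then have sih: "set_integrable lborel {0..1} h"
    unfolding set_integrable_def by (intro integrable_mult_indicator) auto
  have L0: "L12_norm (ext_op (iv n1 i) g0) = K * L12_norm (ext_op {0..1} h)"
    using L12_rescale[OF s g0, of a 0 1] iv_big[OF n1, of i] unfolding K_def h_def a_def s_def by simp
  have Lj: "L12_norm (ext_op (iv (n1 * n2) (i * n2 + j)) g0) = K * L12_norm (ext_op (iv n2 j) h)" for j
  proof -
    have e1: "iv (n1 * n2) (i * n2 + j) = {a + s * (real j / real n2) .. a + s * ((real j + 1) / real n2)}"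
      using iv_small[OF n1 n2, of i j] unfolding a_def s_def .
    have e2: "iv n2 j = {real j / real n2 .. (real j + 1) / real n2}" by (simp add: iv_def)
    show ?thesis unfolding e1 e2 K_def h_def by (rule L12_rescale[OF s g0])
  qed
  have "L12_norm (ext_op {0..1} h) \<le> C2 * enn_root 4 (\<Sum>J\<in>part (1 / real n2). L12_norm (ext_op J h) ^ 4)"
    using C2 sih unfolding Sset_def by blast
  also have "(\<Sum>J\<in>part (1 / real n2). L12_norm (ext_op J h) ^ 4) = (\<Sum>j<n2. L12_norm (ext_op (iv n2 j) h) ^ 4)"
    using part_sum[OF n2] .
  finally have "L12_norm (ext_op (iv n1 i) g0) \<le> K * (C2 * enn_root 4 (\<Sum>j<n2. L12_norm (ext_op (iv n2 j) h) ^ 4))"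
    unfolding L0 by (rule mult_left_mono) simp
  also have "K * (C2 * enn_root 4 (\<Sum>j<n2. L12_norm (ext_op (iv n2 j) h) ^ 4))
      = C2 * (enn_root 4 (K ^ 4) * enn_root 4 (\<Sum>j<n2. L12_norm (ext_op (iv n2 j) h) ^ 4))"
    using enn_root_pow[of 4 K] by (simp add: mult_ac)
  also have "\<dots> = C2 * enn_root 4 (\<Sum>j<n2. L12_norm (ext_op (iv (n1 * n2) (i * n2 + j)) g0) ^ 4)"
    by (simp add: enn_root_mult[symmetric] Lj power_mult_distrib sum_distrib_left)
  finally show ?thesis .
qed


lemma prod_mem:
  assumes n1: "n1 > 0" and n2: "n2 > 0" and C1: "C1 \<in> Sset (1 / real n1)" and C2: "C2 \<in> Sset (1 / real n2)"
  shows "C1 * C2 \<in> Sset (1 / real (n1 * n2))"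
  unfolding Sset_def
proof (intro CollectI allI impI)
  fix g :: "real \<Rightarrow> complex"
  assume sig: "set_integrable lborel {0..1} g"
  define g0 where "g0 = (\<lambda>\<xi>. indicator {0..1::real} \<xi> *\<^sub>R g \<xi>)"
  have ig: "integrable lborel g0" using sig unfolding set_integrable_def g0_def .
  have g0m[measurable]: "g0 \<in> borel_measurable borel"
    using borel_measurable_integrable[OF ig] by simp
  have eqJ: "ext_op J g = ext_op J g0" if "J \<subseteq> {0..1}" for J
    unfolding ext_op_def set_lebesgue_integral_def
    using that by (intro ext Bochner_Integration.integral_cong refl) (auto simp: indicator_def g0_def)
  define N where "N = n1 * n2"
  have N: "N > 0" using n1 n2 by (simp add: N_def)
  have "L12_norm (ext_op {0..1} g) \<le> C1 * enn_root 4 (\<Sum>J\<in>part (1 / real n1). L12_norm (ext_op J g) ^ 4)"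
    using C1 sig unfolding Sset_def by blast
  also have "(\<Sum>J\<in>part (1 / real n1). L12_norm (ext_op J g) ^ 4) = (\<Sum>i<n1. L12_norm (ext_op (iv n1 i) g0) ^ 4)"
    by (simp add: part_sum[OF n1] eqJ iv_sub)
  also have "\<dots> \<le> (\<Sum>i<n1. C2 ^ 4 * (\<Sum>j<n2. L12_norm (ext_op (iv N (i * n2 + j)) g0) ^ 4))"
  proof (rule sum_mono)
    fix i
    have "L12_norm (ext_op (iv n1 i) g0) ^ 4
        \<le> (C2 * enn_root 4 (\<Sum>j<n2. L12_norm (ext_op (iv N (i * n2 + j)) g0) ^ 4)) ^ 4"
      using piece_bound[OF n1 n2 C2 g0m ig, of i] unfolding N_def by (intro power_mono) auto
    also have "\<dots> = C2 ^ 4 * (\<Sum>j<n2. L12_norm (ext_op (iv N (i * n2 + j)) g0) ^ 4)"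
      using pow_enn_root[of 4] by (simp add: power_mult_distrib)
    finally show "L12_norm (ext_op (iv n1 i) g0) ^ 4 \<le> C2 ^ 4 * (\<Sum>j<n2. L12_norm (ext_op (iv N (i * n2 + j)) g0) ^ 4)" .
  qed
  also have "\<dots> = C2 ^ 4 * (\<Sum>k<N. L12_norm (ext_op (iv N k) g0) ^ 4)"
    by (simp add: sum_distrib_left[symmetric] sum_group N_def)
  finally have "L12_norm (ext_op {0..1} g) \<le> C1 * enn_root 4 (C2 ^ 4 * (\<Sum>k<N. L12_norm (ext_op (iv N k) g0) ^ 4))"
    by (rule order_trans) (auto intro!: mult_left_mono enn_root_mono)
  also have "\<dots> = C1 * C2 * enn_root 4 (\<Sum>k<N. L12_norm (ext_op (iv N k) g0) ^ 4)"
    using enn_root_pow[of 4 C2] by (simp add: enn_root_mult mult_ac)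
  also have "(\<Sum>k<N. L12_norm (ext_op (iv N k) g0) ^ 4) = (\<Sum>J\<in>part (1 / real N). L12_norm (ext_op J g) ^ 4)"
    by (simp add: part_sum[OF N] eqJ iv_sub)
  finally show "L12_norm (ext_op {0..1} g) \<le> C1 * C2 * enn_root 4 (\<Sum>J\<in>part (1 / real (n1 * n2)). L12_norm (ext_op J g) ^ 4)"
    unfolding N_def .
qed



lemma phase_meas[measurable]: "phase x \<in> borel_measurable borel"
proof -
  have "(\<lambda>\<xi>. x$1 * \<xi> + x$2 * \<xi>^2 + x$3 * \<xi>^3) \<in> borel_measurable borel" by measurable
  then show ?thesis by (simp add: phase_def[abs_def])
qed

lemma ext_sum:
  assumes n: "n > 0" and g0[measurable]: "g0 \<in> borel_measurable borel" and ig: "integrable lborel g0"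
  shows "ext_op {0..1} g0 x = (\<Sum>k<n. ext_op (iv n k) g0 x)"
proof -
  define F where "F = (\<lambda>\<xi>. g0 \<xi> * e_char (phase x \<xi>))"
  have Fm[measurable]: "F \<in> borel_measurable borel" unfolding F_def by measurable
  have iF: "integrable lborel F"
    by (rule Bochner_Integration.integrable_bound[OF ig]) (auto simp: F_def norm_mult)
  have II: "interval_lebesgue_integrable lborel a b F" for a b
    unfolding interval_lebesgue_integrable_def set_integrable_def
    using iF by (auto intro!: integrable_mult_indicator)
  have E: "ext_op {c..d} g0 x = (LBINT \<xi>=ereal c..ereal d. F \<xi>)" if "c \<le> d" for c d
    using that by (simp add: interval_integral_Icc ext_op_phase F_def)
  have S: "(\<Sum>k<m. (LBINT \<xi>=ereal (real k / real n)..ereal ((real k + 1) / real n). F \<xi>))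
      = (LBINT \<xi>=ereal 0..ereal (real m / real n). F \<xi>)" for m
  proof (induction m)
    case 0 then show ?case by simp
  next
    case (Suc m)
    have "(\<Sum>k<Suc m. (LBINT \<xi>=ereal (real k / real n)..ereal ((real k + 1) / real n). F \<xi>))
        = (LBINT \<xi>=ereal 0..ereal (real m / real n). F \<xi>)
          + (LBINT \<xi>=ereal (real m / real n)..ereal ((real m + 1) / real n). F \<xi>)"
      using Suc by simp
    also have "\<dots> = (LBINT \<xi>=ereal 0..ereal ((real m + 1) / real n). F \<xi>)"
      by (rule interval_integral_sum) (rule II)
    finally show ?case by (simp add: add.commute)
  qed
  have "ext_op {0..1} g0 x = (LBINT \<xi>=ereal 0..ereal (real n / real n). F \<xi>)"
    using n E[of 0 1] by simp
  also have "\<dots> = (\<Sum>k<n. (LBINT \<xi>=ereal (real k / real n)..ereal ((real k + 1) / real n). F \<xi>))"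
    using S[of n] by simp
  also have "\<dots> = (\<Sum>k<n. ext_op (iv n k) g0 x)"
    using n by (intro sum.cong refl) (simp add: iv_def E divide_right_mono)
  finally show ?thesis .
qed

lemma pow_sum_bound:
  fixes b :: "nat \<Rightarrow> real"
  assumes n: "n > 0" and b: "\<And>k. b k \<ge> 0"
  shows "(\<Sum>k<n. b k) ^ 12 \<le> real n ^ 12 * (\<Sum>k<n. b k ^ 12)"
proof -
  define M where "M = Max (b ` {..<n})"
  have Min: "M \<in> b ` {..<n}" unfolding M_def using n by (intro Max_in) auto
  have le: "b k \<le> M" if "k < n" for k unfolding M_def using that by (intro Max_ge) auto
  have "(\<Sum>k<n. b k) \<le> real n * M" using sum_bounded_above[of "{..<n}" b M] le by simp
  then have "(\<Sum>k<n. b k) ^ 12 \<le> (real n * M) ^ 12" by (intro power_mono) (auto intro: sum_nonneg b)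
  also have "\<dots> = real n ^ 12 * M ^ 12" by (simp add: power_mult_distrib)
  also have "M ^ 12 \<le> (\<Sum>k<n. b k ^ 12)"
    using Min by (auto intro!: member_le_sum simp: b)
  finally show ?thesis by (simp add: mult_left_mono)
qed


lemma Sset_finite:
  assumes n: "n > 0"
  shows "enn_root 12 (ennreal (real n ^ 13)) \<in> Sset (1 / real n)"
  unfolding Sset_def
proof (intro CollectI allI impI)
  fix g :: "real \<Rightarrow> complex"
  assume sig: "set_integrable lborel {0..1} g"
  define g0 where "g0 = (\<lambda>\<xi>. indicator {0..1::real} \<xi> *\<^sub>R g \<xi>)"
  have ig: "integrable lborel g0" using sig unfolding set_integrable_def g0_def .
  have g0m[measurable]: "g0 \<in> borel_measurable borel"
    using borel_measurable_integrable[OF ig] by simp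
  have eqJ: "ext_op J g = ext_op J g0" if "J \<subseteq> {0..1}" for J
    unfolding ext_op_def set_lebesgue_integral_def
    using that by (intro ext Bochner_Integration.integral_cong refl) (auto simp: indicator_def g0_def)
  define L where "L = (\<lambda>k. L12_norm (ext_op (iv n k) g0))"
  define W where "W = (\<Sum>k<n. L k ^ 4)"
  define Y where "Y = (\<lambda>k. \<integral>\<^sup>+x. ennreal (cmod (ext_op (iv n k) g0 x)) ^ 12 \<partial>lborel)"
  have ivm: "iv n k \<in> sets borel" for k by (simp add: iv_def)
  have pt: "ennreal (cmod (ext_op {0..1} g0 x)) ^ 12
      \<le> ennreal (real n ^ 12) * (\<Sum>k<n. ennreal (cmod (ext_op (iv n k) g0 x)) ^ 12)" for x
  proof -
    have "cmod (ext_op {0..1} g0 x) \<le> (\<Sum>k<n. cmod (ext_op (iv n k) g0 x))"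
      unfolding ext_sum[OF n g0m ig] by (rule norm_sum)
    then have "cmod (ext_op {0..1} g0 x) ^ 12 \<le> (\<Sum>k<n. cmod (ext_op (iv n k) g0 x)) ^ 12"
      by (intro power_mono) auto
    also have "\<dots> \<le> real n ^ 12 * (\<Sum>k<n. cmod (ext_op (iv n k) g0 x) ^ 12)"
      by (rule pow_sum_bound[OF n]) simp
    finally have "ennreal (cmod (ext_op {0..1} g0 x) ^ 12) \<le> ennreal (real n ^ 12 * (\<Sum>k<n. cmod (ext_op (iv n k) g0 x) ^ 12))"
      by (rule ennreal_leI)
    then show ?thesis
      by (simp add: ennreal_power ennreal_mult sum_nonneg sum_ennreal[symmetric] del: sum_ennreal)
  qed
  have "(\<integral>\<^sup>+x. ennreal (cmod (ext_op {0..1} g0 x)) ^ 12 \<partial>lborel)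
      \<le> (\<integral>\<^sup>+x. ennreal (real n ^ 12) * (\<Sum>k<n. ennreal (cmod (ext_op (iv n k) g0 x)) ^ 12) \<partial>lborel)"
    by (intro nn_integral_mono pt)
  also have "\<dots> = ennreal (real n ^ 12) * (\<Sum>k<n. Y k)"
    unfolding Y_def using ivm by (simp add: nn_integral_cmult nn_integral_sum)
  also have "(\<Sum>k<n. Y k) \<le> of_nat n * W ^ 3"
  proof -
    have "Y k \<le> W ^ 3" if "k < n" for k
    proof -
      have "Y k = L k ^ 12" unfolding L_def Y_def L12_norm_def using pow_enn_root[of 12] by simp
      also have "\<dots> = (L k ^ 4) ^ 3" by (simp flip: power_mult)
      also have "\<dots> \<le> W ^ 3" unfolding W_def using that
        by (intro power_mono) (auto intro!: member_le_sum)
      finally show ?thesis .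
    qed
    then show ?thesis using sum_bounded_above[of "{..<n}" Y "W ^ 3"] by simp
  qed
  finally have X: "(\<integral>\<^sup>+x. ennreal (cmod (ext_op {0..1} g0 x)) ^ 12 \<partial>lborel)
      \<le> ennreal (real n ^ 13) * W ^ 3"
    by (rule order_trans) (auto intro!: mult_left_mono simp: ennreal_of_nat_eq_real_of_nat ennreal_mult[symmetric] mult.assoc[symmetric] power_Suc2[symmetric] simp del: power_Suc)
  have "L12_norm (ext_op {0..1} g0) \<le> enn_root 12 (ennreal (real n ^ 13) * W ^ 3)"
    unfolding L12_norm_def by (intro enn_root_mono X) simp
  also have "\<dots> = enn_root 12 (ennreal (real n ^ 13)) * enn_root 4 W"
    by (simp add: enn_root_mult enn_root_12_cube)
  finally show "L12_norm (ext_op {0..1} g) \<le> enn_root 12 (ennreal (real n ^ 13)) * enn_root 4 (\<Sum>J\<in>part (1 / real n). L12_norm (ext_op J g) ^ 4)"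
    by (simp add: part_sum[OF n] eqJ iv_sub W_def L_def)
qed



lemma Inf_prod_bound:
  fixes z :: ennreal and A B :: "ennreal set"
  assumes zb: "\<And>x y. x \<in> A \<Longrightarrow> y \<in> B \<Longrightarrow> z \<le> x * y"
    and fa: "Inf A < top" and fb: "Inf B < top"
  shows "z \<le> Inf A * Inf B"
proof (rule ennreal_le_epsilon)
  fix e :: real assume e: "0 < e"
  obtain a where a: "a \<ge> 0" "Inf A = ennreal a" using fa by (cases "Inf A" rule: ennreal_cases) auto
  obtain b where b: "b \<ge> 0" "Inf B = ennreal b" using fb by (cases "Inf B" rule: ennreal_cases) auto
  define t where "t = min 1 (e / (a + b + 1))"
  have t: "t > 0" "t \<le> 1" "t \<le> e / (a + b + 1)" using e a b by (auto simp: t_def)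
  have ne: "\<exists>x\<in>S. x \<noteq> top" if "Inf S < top" for S :: "ennreal set"
  proof (rule ccontr)
    assume "\<not> ?thesis"
    then have "top \<le> Inf S" by (auto intro!: Inf_greatest)
    with that show False by simp
  qed
  obtain x where x: "x \<in> A" "x < Inf A + ennreal t"
    using INF_approx_ennreal[where e=t and x="Inf A" and A=A and f="\<lambda>x. x"] t fa ne[OF fa] by auto
  obtain y where y: "y \<in> B" "y < Inf B + ennreal t"
    using INF_approx_ennreal[where e=t and x="Inf B" and A=B and f="\<lambda>x. x"] t fb ne[OF fb] by auto
  have "z \<le> x * y" using zb x y by blast
  also have "\<dots> \<le> (Inf A + ennreal t) * (Inf B + ennreal t)"
    using x y by (intro mult_mono) auto
  also have "\<dots> = ennreal ((a + t) * (b + t))"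
    using a b t by (simp add: ennreal_plus[symmetric] ennreal_mult[symmetric] del: ennreal_plus)
  also have "(a + t) * (b + t) \<le> a * b + e"
  proof -
    have "t * (a + b + t) \<le> t * (a + b + 1)" using t by (intro mult_left_mono) auto
    also have "\<dots> \<le> e" using t a b by (simp add: le_divide_eq)
    finally show ?thesis by (simp add: algebra_simps)
  qed
  then have "ennreal ((a + t) * (b + t)) \<le> ennreal (a * b + e)" by (rule ennreal_leI)
  also have "\<dots> = Inf A * Inf B + ennreal e"
    using a b e by (simp add: ennreal_plus[symmetric] ennreal_mult[symmetric] del: ennreal_plus)
  finally show "z \<le> Inf A * Inf B + ennreal e" .
qed

theorem corollary2p2:
  fixes n1 n2 :: nat and \<delta>1 \<delta>2 :: real
  assumes "n1 > 0" and "n2 > 0"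
    and "\<delta>1 = 1 / real n1" and "\<delta>2 = 1 / real n2"
  shows "Dec (\<delta>1 * \<delta>2) \<le> Dec \<delta>1 * Dec \<delta>2"
proof -
  have d: "\<delta>1 * \<delta>2 = 1 / real (n1 * n2)" using assms by simp
  have fin: "Inf (Sset (1 / real n)) < top" if "n > 0" for n
  proof -
    have "Inf (Sset (1 / real n)) \<le> enn_root 12 (ennreal (real n ^ 13))"
      by (rule Inf_lower) (rule Sset_finite[OF that])
    also have "\<dots> < top" by (simp add: enn_root_ennreal)
    finally show ?thesis .
  qed
  show ?thesis
    unfolding Dec_Sset d
  proof (rule Inf_prod_bound)
    fix x y assume "x \<in> Sset \<delta>1" "y \<in> Sset \<delta>2"
    then show "Inf (Sset (1 / real (n1 * n2))) \<le> x * y"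
      using prod_mem[OF assms(1,2)] assms(3,4) by (intro Inf_lower) auto
  qed (use fin assms in auto)
qed


end
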